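(* For integers $i\ge0$, $j\ge0$ and real $k_1,k_2$, $$\sum_{r=j}^{i}\frac{1}{r!}\,b_{i,r,k_1}\,c_{r,j,k_2}=\binom{i}{j}(k_1-k_2)^{i-j}.$$
   Context: For integers $i\ge0$, $j\ge0$ and real $k$, $b_{i,j,k}=\sum_{r=0}^{j}\binom{j}{r}(-1)^{j-r}(r+k)^i$, with the convention $0^0=1$. The (signed) Stirling numbers of the first kind $s_{i,j}$ ($i,j\ge0$) are defined by $s_{0,0}=1$, $s_{0,j}=0$ for $j>0$, $s_{i,0}=0$ for $i>0$, and $s_{i+1,j}=s_{i,j-1}-i\,s_{i,j}$ for $i\ge0$, $j>0$. For integers $i,j\ge0$ and real $k$, $c_{i,j,k}=\sum_{r=j}^{i}\binom{r}{j}(-k)^{r-j}s_{i,r}$ (with $0^0=1$). An empty sum (when $i<j$) equals $0$, as does $\binom{i}{j}$ for $i<j$. *)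

theory Defs
  imports "HOL-Analysis.Analysis"
begin

text \<open>b_{i,j,k} = sum_{r=0}^{j} binom(j,r) (-1)^(j-r) (r+k)^i, with 0^0 = 1 (as for HOL's power).\<close>
definition b_coef :: "nat \<Rightarrow> nat \<Rightarrow> real \<Rightarrow> real" where
  "b_coef i j k = (\<Sum>r=0..j. real (j choose r) * (-1) ^ (j - r) * (real r + k) ^ i)"

fun stirling1s :: "nat \<Rightarrow> nat \<Rightarrow> int" where
  "stirling1s 0 0 = 1"
| "stirling1s 0 (Suc j) = 0"
| "stirling1s (Suc i) 0 = 0"
| "stirling1s (Suc i) (Suc j) = stirling1s i j - int i * stirling1s i (Suc j)"

definition c_coef :: "nat \<Rightarrow> nat \<Rightarrow> real \<Rightarrow> real" where
  "c_coef i j k = (\<Sum>r=j..i. real (r choose j) * (-k) ^ (r - j) * real_of_int (stirling1s i r))"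

end

theory Submission imports Defs "HOL-Computational_Algebra.Polynomial" begin

lemma sum_if_le: "(\<Sum>r=(j::nat)..n. f r) = (\<Sum>r\<le>n. if j \<le> r then f r else (0::'a::comm_monoid_add))"
proof -
  have "(\<Sum>r\<le>n. if j \<le> r then f r else 0) = (\<Sum>r\<in>{r\<in>{..n}. j \<le> r}. f r)"
    by (rule sum.inter_filter[symmetric]) simp
  also have "{r\<in>{..n}. j \<le> r} = {j..n}" by auto
  finally show ?thesis by simp
qed

lemma swap_tri: "(\<Sum>j\<le>(n::nat). \<Sum>r=j..n. f j r) = (\<Sum>r\<le>n. \<Sum>j\<le>r. (f j r::'a::comm_monoid_add))"
proof -
  have "(\<Sum>j\<le>n. \<Sum>r=j..n. f j r) = (\<Sum>j\<le>n. \<Sum>r\<le>n. if j \<le> r then f j r else 0)"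
    by (simp add: sum_if_le)
  also have "\<dots> = (\<Sum>r\<le>n. \<Sum>j\<le>n. if j \<le> r then f j r else 0)" by (rule sum.swap)
  also have "\<dots> = (\<Sum>r\<le>n. \<Sum>j\<le>r. f j r)"
  proof (rule sum.cong[OF refl])
    fix r assume "r \<in> {..n}"
    have "(\<Sum>j\<le>n. if j \<le> r then f j r else 0) = (\<Sum>j\<in>{j\<in>{..n}. j \<le> r}. f j r)"
      by (rule sum.inter_filter[symmetric]) simp
    also have "{j\<in>{..n}. j \<le> r} = {..r}" using \<open>r \<in> {..n}\<close> by auto
    finally show "(\<Sum>j\<le>n. if j \<le> r then f j r else 0) = (\<Sum>j\<le>r. f j r)" by simp
  qed
  finally show ?thesis .
qed

lemma stir_zero: "i < j \<Longrightarrow> stirling1s i j = 0"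
proof (induction i arbitrary: j)
  case 0 then show ?case by (cases j) auto
next
  case (Suc i) then show ?case by (cases j) auto
qed

lemma stir_poly: "(\<Sum>m\<le>r. real_of_int (stirling1s r m) * z ^ m) = (\<Prod>t<r. z - real t)"
proof (induction r)
  case 0 then show ?case by simp
next
  case (Suc r)
  have "(\<Sum>m\<le>Suc r. real_of_int (stirling1s (Suc r) m) * z ^ m)
      = (\<Sum>m\<le>r. real_of_int (stirling1s (Suc r) (Suc m)) * z ^ Suc m)"
    by (subst sum.atMost_Suc_shift) simp
  also have "\<dots> = z * (\<Sum>m\<le>r. real_of_int (stirling1s r m) * z ^ m)
       - real r * (\<Sum>m\<le>r. real_of_int (stirling1s r (Suc m)) * z ^ Suc m)"
    by (simp add: sum_distrib_left sum_subtractf[symmetric] algebra_simps)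
  also have "(\<Sum>m\<le>r. real_of_int (stirling1s r (Suc m)) * z ^ Suc m)
      = (\<Sum>m\<le>Suc r. real_of_int (stirling1s r m) * z ^ m) - real_of_int (stirling1s r 0)"
    by (subst sum.atMost_Suc_shift) simp
  also have "\<dots> = (\<Sum>m\<le>r. real_of_int (stirling1s r m) * z ^ m) - real_of_int (stirling1s r 0)"
    by (simp add: stir_zero)
  finally have "(\<Sum>m\<le>Suc r. real_of_int (stirling1s (Suc r) m) * z ^ m)
     = (z - real r) * (\<Sum>m\<le>r. real_of_int (stirling1s r m) * z ^ m) + real r * real_of_int (stirling1s r 0)"
    by (simp add: algebra_simps)
  moreover have "real r * real_of_int (stirling1s r 0) = 0" by (cases r) auto
  ultimately show ?case using Suc by (simp add: mult.commute)
qed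

lemma c_poly: "(\<Sum>j\<le>r. c_coef r j k * y ^ j) = (\<Prod>t<r. y - k - real t)"
proof -
  have "(\<Sum>j\<le>r. c_coef r j k * y ^ j)
     = (\<Sum>j\<le>r. \<Sum>m=j..r. real (m choose j) * (-k) ^ (m - j) * real_of_int (stirling1s r m) * y ^ j)"
    by (simp add: c_coef_def sum_distrib_right)
  also have "\<dots> = (\<Sum>m\<le>r. \<Sum>j\<le>m. real (m choose j) * (-k) ^ (m - j) * real_of_int (stirling1s r m) * y ^ j)"
    by (rule swap_tri)
  also have "\<dots> = (\<Sum>m\<le>r. real_of_int (stirling1s r m) * (\<Sum>j\<le>m. real (m choose j) * y^j * (-k)^(m-j)))"
    by (simp add: sum_distrib_left algebra_simps)
  also have "\<dots> = (\<Sum>m\<le>r. real_of_int (stirling1s r m) * (y + (-k)) ^ m)"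
    by (simp only: binomial_ring)
  also have "\<dots> = (\<Prod>t<r. y - k - real t)" by (simp add: stir_poly)
  finally show ?thesis .
qed

lemma b_alt: "b_coef i j k = (\<Sum>r\<le>j. real (j choose r) * (-1) ^ (j - r) * (real r + k) ^ i)"
  unfolding b_coef_def by (simp add: atLeast0AtMost)

lemma b_zero: "b_coef i 0 k = k ^ i"
  by (simp add: b_alt)

lemma b_pascal: "b_coef i (Suc r) k = b_coef i r (k + 1) - b_coef i r k"
proof -
  define g where "g t = (-1::real) ^ (Suc r - t) * (real t + k) ^ i" for t
  have "b_coef i (Suc r) k = (\<Sum>t\<le>Suc r. real (Suc r choose t) * g t)"
    by (simp add: b_alt g_def mult.assoc)
  also have "\<dots> = g 0 + (\<Sum>u\<le>r. real (Suc r choose Suc u) * g (Suc u))"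
    by (subst sum.atMost_Suc_shift) simp
  also have "\<dots> = (g 0 + (\<Sum>u\<le>r. real (r choose Suc u) * g (Suc u)))
       + (\<Sum>u\<le>r. real (r choose u) * g (Suc u))"
    by (simp add: sum.distrib algebra_simps)
  also have "g 0 + (\<Sum>u\<le>r. real (r choose Suc u) * g (Suc u)) = (\<Sum>t\<le>Suc r. real (r choose t) * g t)"
    by (subst sum.atMost_Suc_shift) simp
  also have "\<dots> = (\<Sum>t\<le>r. real (r choose t) * g t)"
    by simp
  also have "\<dots> = - b_coef i r k"
    unfolding b_alt sum_negf[symmetric]
    by (rule sum.cong) (auto simp: g_def Suc_diff_le)
  also have "(\<Sum>u\<le>r. real (r choose u) * g (Suc u)) = b_coef i r (k + 1)"
    unfolding b_alt
    by (rule sum.cong) (auto simp: g_def algebra_simps)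
  finally show ?thesis by simp
qed

lemma b_rec: "b_coef (Suc i) (Suc q) k = k * b_coef i (Suc q) k + real (Suc q) * b_coef i q (k + 1)"
proof -
  define g where "g t = (-1::real) ^ (Suc q - t) * (real t + k) ^ i" for t
  have "b_coef (Suc i) (Suc q) k = (\<Sum>t\<le>Suc q. real (Suc q choose t) * g t * (real t + k))"
    by (simp add: b_alt g_def algebra_simps)
  also have "\<dots> = k * (\<Sum>t\<le>Suc q. real (Suc q choose t) * g t)
     + (\<Sum>t\<le>Suc q. real t * real (Suc q choose t) * g t)"
    by (simp add: sum_distrib_left sum.distrib[symmetric] algebra_simps)
  also have "(\<Sum>t\<le>Suc q. real (Suc q choose t) * g t) = b_coef i (Suc q) k"
    by (simp add: b_alt g_def mult.assoc)
  also have "(\<Sum>t\<le>Suc q. real t * real (Suc q choose t) * g t)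
      = (\<Sum>u\<le>q. real (Suc u) * real (Suc q choose Suc u) * g (Suc u))"
    by (subst sum.atMost_Suc_shift) simp
  also have "\<dots> = (\<Sum>u\<le>q. real (Suc q) * (real (q choose u) * g (Suc u)))"
  proof (rule sum.cong[OF refl])
    fix u
    have "real (Suc u) * real (Suc q choose Suc u) = real (Suc q) * real (q choose u)"
      by (metis Suc_times_binomial of_nat_mult)
    then show "real (Suc u) * real (Suc q choose Suc u) * g (Suc u) = real (Suc q) * (real (q choose u) * g (Suc u))"
      by (simp add: mult.assoc[symmetric])
  qed
  also have "\<dots> = real (Suc q) * b_coef i q (k + 1)"
    unfolding b_alt sum_distrib_left
    by (rule sum.cong) (auto simp: g_def algebra_simps)
  finally show ?thesis .
qed

lemma b_vanish: "i < r \<Longrightarrow> b_coef i r k = 0"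
proof (induction i arbitrary: r k)
  case 0
  then obtain q where r: "r = Suc q" by (cases r) auto
  have "(1 + (-1::real)) ^ r = (\<Sum>t\<le>r. real (r choose t) * 1 ^ t * (-1) ^ (r - t))"
    by (rule binomial_ring)
  then have "b_coef 0 r k = (1 + (-1::real)) ^ r" by (simp add: b_alt)
  then show ?case using r by simp
next
  case (Suc i)
  then obtain q where r: "r = Suc q" by (cases r) auto
  show ?case using Suc r by (simp add: b_rec)
qed

lemma b_newton_nat: "(\<Sum>r\<le>n. real (n choose r) * b_coef i r k) = (real n + k) ^ i"
proof (induction n arbitrary: k)
  case 0 then show ?case by (simp add: b_zero)
next
  case (Suc n)
  have "(\<Sum>r\<le>Suc n. real (Suc n choose r) * b_coef i r k)
     = (b_coef i 0 k + (\<Sum>u\<le>n. real (n choose Suc u) * b_coef i (Suc u) k))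
       + (\<Sum>u\<le>n. real (n choose u) * b_coef i (Suc u) k)"
    by (subst sum.atMost_Suc_shift) (simp add: sum.distrib algebra_simps)
  also have "b_coef i 0 k + (\<Sum>u\<le>n. real (n choose Suc u) * b_coef i (Suc u) k)
      = (\<Sum>r\<le>Suc n. real (n choose r) * b_coef i r k)"
    by (subst sum.atMost_Suc_shift) simp
  also have "\<dots> = (\<Sum>r\<le>n. real (n choose r) * b_coef i r k)" by simp
  finally have "(\<Sum>r\<le>Suc n. real (Suc n choose r) * b_coef i r k)
     = (\<Sum>r\<le>n. real (n choose r) * (b_coef i r k + b_coef i (Suc r) k))"
    by (simp add: sum.distrib algebra_simps)
  also have "\<dots> = (\<Sum>r\<le>n. real (n choose r) * b_coef i r (k + 1))"
    by (simp add: b_pascal)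
  also have "\<dots> = (real n + (k + 1)) ^ i" by (rule Suc.IH)
  finally show ?case by (simp add: algebra_simps)
qed

lemma prod_binom: "(\<Prod>t<r. real n - real t) = fact r * real (n choose r)"
  by (simp add: binomial_gbinomial gbinomial_prod_rev atLeast0LessThan)

lemma b_newton: "(\<Sum>r\<le>i. b_coef i r k / fact r * (\<Prod>t<r. real n - real t)) = (real n + k) ^ i"
proof -
  have "(\<Sum>r\<le>i. b_coef i r k / fact r * (\<Prod>t<r. real n - real t))
      = (\<Sum>r\<le>i. real (n choose r) * b_coef i r k)"
    by (simp add: prod_binom mult.commute)
  also have "\<dots> = (\<Sum>r\<le>i+n. real (n choose r) * b_coef i r k)"
    by (rule sum.mono_neutral_left) (auto simp: b_vanish)
  also have "\<dots> = (\<Sum>r\<le>n. real (n choose r) * b_coef i r k)"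
    by (rule sum.mono_neutral_right) auto
  finally show ?thesis by (simp add: b_newton_nat)
qed

lemma key_eval:
  fixes k1 k2 :: real and i n :: nat
  assumes y_def: "y = k2 + real n"
  shows "(\<Sum>j\<le>i. (\<Sum>r=j..i. (1 / fact r) * b_coef i r k1 * c_coef r j k2) * y ^ j)
       = (\<Sum>j\<le>i. real (i choose j) * (k1 - k2) ^ (i - j) * y ^ j)"
proof -
  have "(\<Sum>j\<le>i. (\<Sum>r=j..i. (1 / fact r) * b_coef i r k1 * c_coef r j k2) * y ^ j)
      = (\<Sum>j\<le>i. \<Sum>r=j..i. (1 / fact r) * b_coef i r k1 * (c_coef r j k2 * y ^ j))"
    by (simp add: sum_distrib_right mult.assoc)
  also have "\<dots> = (\<Sum>r\<le>i. \<Sum>j\<le>r. (1 / fact r) * b_coef i r k1 * (c_coef r j k2 * y ^ j))"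
    by (rule swap_tri)
  also have "\<dots> = (\<Sum>r\<le>i. (1 / fact r) * b_coef i r k1 * (\<Prod>t<r. y - k2 - real t))"
    by (rule sum.cong[OF refl]) (simp only: sum_distrib_left[symmetric] c_poly)
  also have "\<dots> = (\<Sum>r\<le>i. b_coef i r k1 / fact r * (\<Prod>t<r. real n - real t))"
    by (simp add: y_def)
  also have "\<dots> = (real n + k1) ^ i" by (rule b_newton)
  also have "\<dots> = (y + (k1 - k2)) ^ i" by (simp add: y_def)
  also have "\<dots> = (\<Sum>j\<le>i. real (i choose j) * (k1 - k2) ^ (i - j) * y ^ j)"
    unfolding binomial_ring by (intro sum.cong refl) (simp only: mult_ac)
  finally show ?thesis .
qed

theorem mainTheorem17:
  fixes i j :: nat and k1 k2 :: real
  shows "(\<Sum>r=j..i. (1 / fact r) * b_coef i r k1 * c_coef r j k2)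
           = real (i choose j) * (k1 - k2) ^ (i - j)"
proof (cases "j \<le> i")
  case False
  then show ?thesis by simp
next
  case True
  define A where "A j = (\<Sum>r=j..i. (1 / fact r) * b_coef i r k1 * c_coef r j k2)" for j
  define B where "B j = real (i choose j) * (k1 - k2) ^ (i - j)" for j
  define p where "p = (\<Sum>l\<le>i. monom (A l - B l) l)"
  have ev: "poly p y = (\<Sum>l\<le>i. A l * y ^ l) - (\<Sum>l\<le>i. B l * y ^ l)" for y
    by (simp add: p_def poly_sum poly_monom sum_subtractf algebra_simps)
  have roots: "range (\<lambda>n::nat. k2 + real n) \<subseteq> {y. poly p y = 0}"
  proof
    fix y assume "y \<in> range (\<lambda>n::nat. k2 + real n)"
    then obtain n where yn: "y = k2 + real n" by auto
    have "poly p y = 0"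
      unfolding ev A_def B_def key_eval[OF yn] by simp
    then show "y \<in> {y. poly p y = 0}" by simp
  qed
  have "infinite (range (\<lambda>n::nat. k2 + real n))"
    by (rule range_inj_infinite) (auto simp: inj_on_def)
  then have "infinite {y. poly p y = 0}" using roots finite_subset by blast
  then have "p = 0" using poly_roots_finite by blast
  then have "coeff p j = 0" by simp
  moreover have "coeff p j = A j - B j"
    unfolding p_def by (rule coeff_sum_monom[OF True])
  ultimately show ?thesis by (simp add: A_def B_def)
qed

end
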